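(* Let $\mathcal{G}=(\mathcal{V},E)$ be an undirected graph, $\mathcal{V}=\{1,\dots,N\}$, and let $X=(X_1,\dots,X_N)$ be a Markov random field on $\mathcal{G}$ with each $X_i$ taking values in a finite alphabet $\mathcal{X}_i$. Let $g_i:\mathcal{X}_i\to\mathcal{Y}_i$ be functions and $Y_i=g_i(X_i)$, $Y=(Y_1,\dots,Y_N)$. If for every $i\in\mathcal{V}$ $$H(Y_i\mid Y_{\mathcal{N}_i})=H(Y_i\mid X_{\mathcal{N}_i}),$$ then $Y$ is a Markov random field on $\mathcal{G}$.
   Context: $\mathcal{N}_i=\{j\neq i:\{i,j\}\in E\}$; for $A\subseteq\mathcal{V}$, $X_A=(X_j,j\in A)$. $X$ is a Markov random field on $\mathcal{G}$ if for every $i$, $p_{X_i|X_{\mathcal{V}\setminus\{i\}}}=p_{X_i|X_{\mathcal{N}_i}}$. $H$ denotes Shannon (conditional) entropy. *)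

theory Defs
  imports "HOL-Probability.Probability"
begin

definition nbrs :: "'v set set \<Rightarrow> 'v \<Rightarrow> 'v set" where
  "nbrs E i = {j. j \<noteq> i \<and> {i, j} \<in> E}"

definition agree_on :: "'v set \<Rightarrow> ('v \<Rightarrow> 'a) \<Rightarrow> ('v \<Rightarrow> 'a) set" where
  "agree_on S x = {z. \<forall>j\<in>S. z j = x j}"

definition cond_prob :: "('v \<Rightarrow> 'a) pmf \<Rightarrow> 'v \<Rightarrow> 'a \<Rightarrow> 'v set \<Rightarrow> ('v \<Rightarrow> 'a) \<Rightarrow> real" where
  "cond_prob q i a S x =
     measure_pmf.prob q ({z. z i = a} \<inter> agree_on S x) / measure_pmf.prob q (agree_on S x)"

definition markov_random_field :: "'v set \<Rightarrow> 'v set set \<Rightarrow> ('v \<Rightarrow> 'a) pmf \<Rightarrow> bool" where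
  "markov_random_field V E q \<longleftrightarrow>
     (\<forall>i\<in>V. \<forall>x a. measure_pmf.prob q (agree_on (V - {i}) x) > 0 \<longrightarrow>
        cond_prob q i a (V - {i}) x = cond_prob q i a (nbrs E i) x)"

text \<open>Shannon conditional entropy H(U | W) (in bits) of random variables U, W defined on
  a discrete probability space q (finite support assumed where used).\<close>
definition cond_entropy :: "'c pmf \<Rightarrow> ('c \<Rightarrow> 'u) \<Rightarrow> ('c \<Rightarrow> 'w) \<Rightarrow> real" where
  "cond_entropy q U W =
     (let J = map_pmf (\<lambda>z. (U z, W z)) q; M = map_pmf W q in
      (\<Sum>uw\<in>set_pmf J. pmf J uw * log 2 (pmf M (snd uw) / pmf J uw)))"

end

theory Submission
  imports Defs
begin


definition ind :: "bool \<Rightarrow> real" where "ind b = (if b then 1 else 0)"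

definition cls :: "'c pmf \<Rightarrow> ('c \<Rightarrow> 'r) \<Rightarrow> 'c \<Rightarrow> 'c set" where
  "cls q R x = {z \<in> set_pmf q. R z = R x}"

definition ce :: "'c pmf \<Rightarrow> ('c \<Rightarrow> 'r) \<Rightarrow> ('c \<Rightarrow> real) \<Rightarrow> 'c \<Rightarrow> real" where
  "ce q R f x = (\<Sum>z\<in>cls q R x. pmf q z * f z) / (\<Sum>z\<in>cls q R x. pmf q z)"

lemma ce_R: "R x = R x' \<Longrightarrow> ce q R f x = ce q R f x'"
  unfolding ce_def cls_def by simp

lemma cls_fin: "finite (set_pmf q) \<Longrightarrow> finite (cls q R x)"
  unfolding cls_def by simp

lemma den_pos: assumes "finite (set_pmf q)" "x \<in> set_pmf q"
  shows "(\<Sum>z\<in>cls q R x. pmf q z) > 0"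
proof -
  have "x \<in> cls q R x" using assms unfolding cls_def by simp
  moreover have "pmf q x > 0" using assms by (simp add: pmf_positive)
  ultimately show ?thesis using assms
    by (metis cls_fin pmf_nonneg sum_pos2)
qed

lemma ce_cong: "(\<And>z. z \<in> set_pmf q \<Longrightarrow> f z = f' z) \<Longrightarrow> ce q R f x = ce q R f' x"
  unfolding ce_def cls_def by (intro arg_cong2[where f="(/)"] sum.cong) auto

lemma ce_sum: "ce q R (\<lambda>z. \<Sum>b\<in>T. h b z) x = (\<Sum>b\<in>T. ce q R (h b) x)"
proof -
  have "(\<Sum>z\<in>cls q R x. pmf q z * (\<Sum>b\<in>T. h b z)) = (\<Sum>b\<in>T. \<Sum>z\<in>cls q R x. pmf q z * h b z)"
    unfolding sum_distrib_left by (rule sum.swap)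
  then show ?thesis unfolding ce_def by (simp add: sum_divide_distrib)
qed

lemma ce_const: assumes "finite (set_pmf q)" "x \<in> set_pmf q"
    "\<And>z. z \<in> set_pmf q \<Longrightarrow> R z = R x \<Longrightarrow> h z = c"
  shows "ce q R h x = c"
proof -
  have "(\<Sum>z\<in>cls q R x. pmf q z * h z) = (\<Sum>z\<in>cls q R x. pmf q z) * c"
    by (simp add: sum_distrib_right, rule sum.cong) (auto simp: cls_def assms(3))
  then show ?thesis using den_pos[OF assms(1,2), of R] unfolding ce_def by simp
qed

lemma ce_pull: assumes "\<And>z. z \<in> set_pmf q \<Longrightarrow> R z = R x \<Longrightarrow> c z = c x"
  shows "ce q R (\<lambda>z. c z * f z) x = c x * ce q R f x"
proof -
  have "(\<Sum>z\<in>cls q R x. pmf q z * (c z * f z)) = c x * (\<Sum>z\<in>cls q R x. pmf q z * f z)"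
    by (simp add: sum_distrib_left, rule sum.cong) (auto simp: cls_def assms)
  then show ?thesis unfolding ce_def by simp
qed

lemma ce_tower: assumes fin: "finite (set_pmf q)" and x: "x \<in> set_pmf q"
  and fine: "\<And>z z'. z \<in> set_pmf q \<Longrightarrow> z' \<in> set_pmf q \<Longrightarrow> Rf z = Rf z' \<Longrightarrow> Rc z = Rc z'"
  shows "ce q Rc f x = ce q Rc (ce q Rf f) x"
proof -
  let ?C = "cls q Rc x"
  let ?D = "\<lambda>z. (\<Sum>z'\<in>cls q Rf z. pmf q z')"
  have finC: "finite ?C" using fin by (rule cls_fin)
  have sub: "cls q Rf z = {z'\<in>?C. Rf z' = Rf z}" if "z \<in> ?C" for z
  proof (intro equalityI subsetI)
    fix z' assume "z' \<in> cls q Rf z"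
    then have z': "z' \<in> set_pmf q" "Rf z' = Rf z" unfolding cls_def by simp_all
    have zS: "z \<in> set_pmf q" "Rc z = Rc x" using that unfolding cls_def by simp_all
    have "Rc z' = Rc z" by (rule fine[OF z'(1) zS(1) z'(2)])
    then show "z' \<in> {z'\<in>?C. Rf z' = Rf z}" using z' zS unfolding cls_def by simp
  next
    fix z' assume "z' \<in> {z'\<in>?C. Rf z' = Rf z}"
    then show "z' \<in> cls q Rf z" unfolding cls_def by simp
  qed
  have "(\<Sum>z\<in>?C. pmf q z * ce q Rf f z)
      = (\<Sum>z\<in>?C. \<Sum>z'\<in>?C. if Rf z' = Rf z then pmf q z * (pmf q z' * f z') / ?D z else 0)"
  proof (rule sum.cong[OF refl])
    fix z assume z: "z \<in> ?C"
    have "pmf q z * ce q Rf f z = (\<Sum>z'\<in>cls q Rf z. pmf q z * (pmf q z' * f z') / ?D z)"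
      unfolding ce_def by (simp add: sum_distrib_left sum_divide_distrib)
    also have "\<dots> = (\<Sum>z'\<in>{z'\<in>?C. Rf z' = Rf z}. pmf q z * (pmf q z' * f z') / ?D z)"
      using sub[OF z] by simp
    also have "\<dots> = (\<Sum>z'\<in>?C. if Rf z' = Rf z then pmf q z * (pmf q z' * f z') / ?D z else 0)"
      using finC by (simp add: sum.inter_filter)
    finally show "pmf q z * ce q Rf f z = \<dots>" .
  qed
  also have "\<dots> = (\<Sum>z'\<in>?C. \<Sum>z\<in>?C. if Rf z = Rf z' then pmf q z * (pmf q z' * f z') / ?D z' else 0)"
  proof (subst sum.swap, intro sum.cong refl)
    fix z' z assume "z' \<in> ?C" "z \<in> ?C"
    have "Rf z' = Rf z \<Longrightarrow> ?D z = ?D z'" unfolding cls_def by simp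
    then show "(if Rf z' = Rf z then pmf q z * (pmf q z' * f z') / ?D z else 0) =
          (if Rf z = Rf z' then pmf q z * (pmf q z' * f z') / ?D z' else 0)" by auto
  qed
  also have "\<dots> = (\<Sum>z'\<in>?C. pmf q z' * f z')"
  proof (rule sum.cong[OF refl])
    fix z' assume z': "z' \<in> ?C"
    have "z' \<in> set_pmf q" using z' unfolding cls_def by simp
    then have Dp: "?D z' > 0" using den_pos[OF fin] by blast
    have "(\<Sum>z\<in>?C. if Rf z = Rf z' then pmf q z * (pmf q z' * f z') / ?D z' else 0)
        = (\<Sum>z\<in>{z\<in>?C. Rf z = Rf z'}. pmf q z * (pmf q z' * f z') / ?D z')"
      using finC by (simp add: sum.inter_filter)
    also have "\<dots> = (\<Sum>z\<in>cls q Rf z'. pmf q z) * (pmf q z' * f z') / ?D z'"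
      using sub[OF z'] by (simp add: sum_distrib_right sum_divide_distrib)
    also have "\<dots> = pmf q z' * f z'" using Dp by simp
    finally show "(\<Sum>z\<in>?C. if Rf z = Rf z' then pmf q z * (pmf q z' * f z') / ?D z' else 0) = pmf q z' * f z'" .
  qed
  finally show ?thesis unfolding ce_def by simp
qed

lemma ce_nonneg: "(\<And>z. z \<in> set_pmf q \<Longrightarrow> f z \<ge> 0) \<Longrightarrow> ce q R f x \<ge> 0"
  unfolding ce_def cls_def by (intro divide_nonneg_nonneg sum_nonneg) auto

lemma ce_total: assumes "finite (set_pmf q)"
  shows "(\<Sum>z\<in>set_pmf q. pmf q z * f z) = ce q (\<lambda>_. ()) f x"
proof -
  have "cls q (\<lambda>_. ()) x = set_pmf q" unfolding cls_def by auto
  then show ?thesis unfolding ce_def using sum_pmf_eq_1[OF assms order_refl] by simp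
qed



lemma prob_sum: "finite (set_pmf q) \<Longrightarrow> measure_pmf.prob q B = (\<Sum>z\<in>{z\<in>set_pmf q. z \<in> B}. pmf q z)"
proof -
  assume f: "finite (set_pmf q)"
  have "measure_pmf.prob q B = measure_pmf.prob q (B \<inter> set_pmf q)" by (simp add: measure_Int_set_pmf)
  also have "\<dots> = sum (pmf q) (B \<inter> set_pmf q)" using f by (simp add: measure_measure_pmf_finite)
  also have "B \<inter> set_pmf q = {z\<in>set_pmf q. z \<in> B}" by auto
  finally show ?thesis .
qed

lemma ent_formula:
  assumes fin: "finite (set_pmf q)"
  shows "cond_entropy q U W = - (\<Sum>z\<in>set_pmf q. pmf q z * log 2 (ce q W (\<lambda>z'. ind (U z' = U z)) z))"
proof -
  define h where "h = (\<lambda>z. (U z, W z))"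
  define J where "J = map_pmf h q"
  define M where "M = map_pmf W q"
  have setJ: "set_pmf J = h ` set_pmf q" unfolding J_def by simp
  have pJ: "pmf J k = (\<Sum>z\<in>{z\<in>set_pmf q. h z = k}. pmf q z)" for k
    unfolding J_def pmf_map using prob_sum[OF fin] by simp
  have pM: "pmf M w = (\<Sum>z\<in>{z\<in>set_pmf q. W z = w}. pmf q z)" for w
    unfolding M_def pmf_map using prob_sum[OF fin] by simp
  have key: "pmf M (W z) / pmf J (h z) = inverse (ce q W (\<lambda>z'. ind (U z' = U z)) z)" if "z \<in> set_pmf q" for z
  proof -
    have "(\<Sum>z'\<in>cls q W z. pmf q z' * ind (U z' = U z)) = (\<Sum>z'\<in>{z'\<in>cls q W z. U z' = U z}. pmf q z')"
      by (simp add: sum.inter_filter[OF cls_fin[OF fin]] ind_def, intro sum.cong, auto)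
    also have "{z'\<in>cls q W z. U z' = U z} = {z'\<in>set_pmf q. h z' = h z}"
      unfolding cls_def h_def by auto
    finally have n: "(\<Sum>z'\<in>cls q W z. pmf q z' * ind (U z' = U z)) = pmf J (h z)" using pJ by simp
    have d: "(\<Sum>z'\<in>cls q W z. pmf q z') = pmf M (W z)" using pM unfolding cls_def by simp
    show ?thesis unfolding ce_def n d by simp
  qed
  have pos: "ce q W (\<lambda>z'. ind (U z' = U z)) z > 0" if "z \<in> set_pmf q" for z
  proof -
    have "pmf J (h z) > 0" using that unfolding J_def by (simp add: pmf_positive)
    moreover have "pmf M (W z) > 0" using that unfolding M_def by (simp add: pmf_positive)
    ultimately show ?thesis using key[OF that]
      by (metis inverse_positive_iff_positive zero_less_divide_iff)
  qed
  have "cond_entropy q U W = (\<Sum>k\<in>h ` set_pmf q. pmf J k * log 2 (pmf M (snd k) / pmf J k))"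
    unfolding cond_entropy_def Let_def J_def[symmetric] M_def[symmetric] h_def[symmetric] setJ by simp
  also have "\<dots> = (\<Sum>k\<in>h ` set_pmf q. \<Sum>z\<in>{z\<in>set_pmf q. h z = k}. pmf q z * log 2 (pmf M (W z) / pmf J (h z)))"
    by (intro sum.cong refl) (auto simp: pJ sum_distrib_right h_def)
  also have "\<dots> = (\<Sum>z\<in>set_pmf q. pmf q z * log 2 (pmf M (W z) / pmf J (h z)))"
    using sum.image_gen[OF fin, of "\<lambda>z. pmf q z * log 2 (pmf M (W z) / pmf J (h z))" h] by simp
  also have "\<dots> = (\<Sum>z\<in>set_pmf q. - (pmf q z * log 2 (ce q W (\<lambda>z'. ind (U z' = U z)) z)))"
    by (intro sum.cong refl) (simp add: key pos log_inverse)
  finally show ?thesis by (simp add: sum_negf)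
qed



lemma ce_mono: "(\<And>z. z \<in> set_pmf q \<Longrightarrow> f z \<le> g z) \<Longrightarrow> ce q R f x \<le> ce q R g x"
  unfolding ce_def cls_def
  by (intro divide_right_mono sum_mono mult_left_mono) (auto intro!: sum_nonneg)

lemma ce_zero: "(\<And>z. z \<in> set_pmf q \<Longrightarrow> f z = 0) \<Longrightarrow> ce q R f x = 0"
  using ce_cong[of q f "\<lambda>_. 0" R x] unfolding ce_def by simp

lemma ce_ind_pos: assumes fin: "finite (set_pmf q)" and x: "x \<in> set_pmf q"
  shows "ce q R (\<lambda>z. ind (U z = U x)) x > 0"
proof -
  have xc: "x \<in> cls q R x" using x unfolding cls_def by simp
  have "0 < pmf q x * ind (U x = U x)" using x by (simp add: pmf_positive ind_def)
  also have "\<dots> \<le> (\<Sum>z\<in>cls q R x. pmf q z * ind (U z = U x))"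
    by (rule member_le_sum[OF xc]) (auto simp: ind_def cls_fin[OF fin])
  finally show ?thesis unfolding ce_def using den_pos[OF fin x, of R] by simp
qed

lemma ce_ind_sum: assumes fin: "finite (set_pmf q)" and x: "x \<in> set_pmf q"
  shows "(\<Sum>u\<in>U ` set_pmf q. ce q R (\<lambda>z. ind (U z = u)) x) = 1"
proof -
  have "(\<Sum>u\<in>U ` set_pmf q. ce q R (\<lambda>z. ind (U z = u)) x) = ce q R (\<lambda>z. \<Sum>u\<in>U ` set_pmf q. ind (U z = u)) x"
    by (rule ce_sum[symmetric])
  also have "\<dots> = 1"
  proof (rule ce_const[OF fin x])
    fix z assume z: "z \<in> set_pmf q"
    have "(\<Sum>u\<in>U ` set_pmf q. ind (U z = u)) = (\<Sum>u\<in>U ` set_pmf q. if u = U z then 1 else 0)"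
      by (intro sum.cong) (auto simp: ind_def)
    also have "\<dots> = 1" using z fin by (simp add: sum.delta')
    finally show "(\<Sum>u\<in>U ` set_pmf q. ind (U z = u)) = 1" .
  qed
  finally show ?thesis .
qed

lemma ent_eq:
  assumes fin: "finite (set_pmf q)"
    and VW: "\<And>z z'. z \<in> set_pmf q \<Longrightarrow> z' \<in> set_pmf q \<Longrightarrow> V z = V z' \<Longrightarrow> W z = W z'"
    and eq: "cond_entropy q U W = cond_entropy q U V"
    and x: "x \<in> set_pmf q"
  shows "ce q V (\<lambda>z. ind (U z = u)) x = ce q W (\<lambda>z. ind (U z = u)) x"
proof -
  let ?S = "set_pmf q"
  define cuV where "cuV u z = ce q V (\<lambda>z'. ind (U z' = u)) z" for u z
  define cuW where "cuW u z = ce q W (\<lambda>z'. ind (U z' = u)) z" for u z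
  define t where "t z = cuW (U z) z / cuV (U z) z" for z
  have posV: "cuV (U z) z > 0" if "z \<in> ?S" for z using ce_ind_pos[OF fin that] unfolding cuV_def by blast
  have posW: "cuW (U z) z > 0" if "z \<in> ?S" for z using ce_ind_pos[OF fin that] unfolding cuW_def by blast
  have tpos: "t z > 0" if "z \<in> ?S" for z using posV[OF that] posW[OF that] unfolding t_def by simp
  have measV: "cuV u z = cuV u z'" if "V z = V z'" for u z z' unfolding cuV_def by (rule ce_R[of V, OF that])
  have measW: "cuW u z = cuW u z'" if "z \<in> ?S" "z' \<in> ?S" "V z = V z'" for u z z'
    unfolding cuW_def by (rule ce_R[of W, OF VW[OF that]])
  have nnV: "cuV u z \<ge> 0" for u z unfolding cuV_def by (rule ce_nonneg) (simp add: ind_def)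
  have nnW: "cuW u z \<ge> 0" for u z unfolding cuW_def by (rule ce_nonneg) (simp add: ind_def)
  have S1: "(\<Sum>z\<in>?S. pmf q z * ln (t z)) = 0"
  proof -
    have e: "(\<Sum>z\<in>?S. pmf q z * log 2 (cuW (U z) z)) = (\<Sum>z\<in>?S. pmf q z * log 2 (cuV (U z) z))"
      using eq unfolding ent_formula[OF fin] cuV_def cuW_def by simp
    have "(\<Sum>z\<in>?S. pmf q z * ln (t z)) = (\<Sum>z\<in>?S. ln 2 * (pmf q z * log 2 (cuW (U z) z)) - ln 2 * (pmf q z * log 2 (cuV (U z) z)))"
    proof (intro sum.cong refl)
      fix z assume z: "z \<in> ?S"
      have l: "ln (t z) = ln (cuW (U z) z) - ln (cuV (U z) z)"
        unfolding t_def using ln_div posW[OF z] posV[OF z] by simp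
      have l2: "ln 2 * log 2 a = ln a" for a :: real by (simp add: log_def)
      show "pmf q z * ln (t z) = ln 2 * (pmf q z * log 2 (cuW (U z) z)) - ln 2 * (pmf q z * log 2 (cuV (U z) z))"
        unfolding l by (simp add: algebra_simps l2 mult.left_commute[of "ln 2"])
    qed
    also have "\<dots> = 0" using e by (simp add: sum_subtractf sum_distrib_left[symmetric])
    finally show ?thesis .
  qed
  define h where "h z = (\<Sum>u\<in>U ` ?S. (cuW u z / cuV u z) * ind (U z = u))" for z
  have ht: "h z = t z" if "z \<in> ?S" for z
  proof -
    have "h z = (\<Sum>u\<in>U ` ?S. if u = U z then cuW u z / cuV u z else 0)"
      unfolding h_def by (intro sum.cong) (auto simp: ind_def)
    also have "\<dots> = t z" using that fin by (simp add: sum.delta' t_def)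
    finally show ?thesis .
  qed
  have ceh: "ce q V h z \<le> 1" if z: "z \<in> ?S" for z
  proof -
    have "ce q V h z = (\<Sum>u\<in>U ` ?S. ce q V (\<lambda>z'. (cuW u z' / cuV u z') * ind (U z' = u)) z)"
      unfolding h_def by (rule ce_sum)
    also have "\<dots> = (\<Sum>u\<in>U ` ?S. (cuW u z / cuV u z) * cuV u z)"
    proof (intro sum.cong refl)
      fix u
      show "ce q V (\<lambda>z'. (cuW u z' / cuV u z') * ind (U z' = u)) z = (cuW u z / cuV u z) * cuV u z"
      proof -
        have "ce q V (\<lambda>z'. (cuW u z' / cuV u z') * ind (U z' = u)) z = (cuW u z / cuV u z) * ce q V (\<lambda>z'. ind (U z' = u)) z"
          proof (rule ce_pull)
            fix z' assume "z' \<in> ?S" "V z' = V z"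
            then show "cuW u z' / cuV u z' = cuW u z / cuV u z" using measV[of z' z u] measW[of z' z u] z by simp
          qed
        then show ?thesis by (simp only: cuV_def[of u z, symmetric])
      qed
    qed
    also have "\<dots> \<le> (\<Sum>u\<in>U ` ?S. cuW u z)"
      proof (intro sum_mono)
      fix u show "cuW u z / cuV u z * cuV u z \<le> cuW u z" by (cases "cuV u z = 0") (simp_all add: nnW)
    qed
    also have "\<dots> = 1" using ce_ind_sum[OF fin z, where U=U and R=W] unfolding cuW_def by simp
    finally show ?thesis .
  qed
  have S2: "(\<Sum>z\<in>?S. pmf q z * t z) \<le> 1"
  proof -
    have "(\<Sum>z\<in>?S. pmf q z * t z) = (\<Sum>z\<in>?S. pmf q z * h z)" by (intro sum.cong) (auto simp: ht)
    also have "\<dots> = ce q (\<lambda>_. ()) h x" by (rule ce_total[OF fin])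
    also have "\<dots> = ce q (\<lambda>_. ()) (ce q V h) x" by (rule ce_tower[OF fin x]) simp
    also have "\<dots> \<le> ce q (\<lambda>_. ()) (\<lambda>_. 1) x" by (rule ce_mono) (rule ceh)
    also have "\<dots> = 1" by (rule ce_const[OF fin x]) simp
    finally show ?thesis .
  qed
  have S3: "cuW (U z) z = cuV (U z) z" if z: "z \<in> ?S" for z
  proof -
    define g where "g z = pmf q z * ((t z - 1) - ln (t z))" for z
    have gnn: "g z \<ge> 0" if "z \<in> ?S" for z
      unfolding g_def using ln_le_minus_one[OF tpos[OF that]] by simp
    have "(\<Sum>z\<in>?S. g z) = (\<Sum>z\<in>?S. pmf q z * t z) - (\<Sum>z\<in>?S. pmf q z) - (\<Sum>z\<in>?S. pmf q z * ln (t z))"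
      unfolding g_def by (simp add: right_diff_distrib sum_subtractf)
    also have "\<dots> \<le> 0" using S1 S2 sum_pmf_eq_1[OF fin order_refl] by simp
    finally have "(\<Sum>z\<in>?S. g z) = 0" using sum_nonneg[of ?S g] gnn by force
    then have "g z = 0" using sum_nonneg_eq_0_iff[OF fin, of g] gnn z by blast
    then have "ln (t z) = t z - 1" using z unfolding g_def by (auto simp: set_pmf_iff)
    then have "t z = 1" using ln_eq_minus_one tpos[OF z] by blast
    then show ?thesis using posV[OF z] unfolding t_def by simp
  qed
  show ?thesis
  proof (cases "u \<in> U ` ?S")
    case False
    then have "\<And>z. z \<in> ?S \<Longrightarrow> ind (U z = u) = 0" by (auto simp: ind_def)
    then have "ce q V (\<lambda>z. ind (U z = u)) x = 0" "ce q W (\<lambda>z. ind (U z = u)) x = 0"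
      by (simp_all add: ce_zero)
    then show ?thesis by simp
  next
    case True
    have le: "cuV u' x \<le> cuW u' x" if "u' \<in> U ` ?S" for u'
    proof (cases "cuV u' x > 0")
      case True
      have "\<exists>z'\<in>cls q V x. U z' = u'"
      proof (rule ccontr)
        assume "\<not> ?thesis"
        then have "cuV u' x = 0" unfolding cuV_def ce_def by (simp add: ind_def)
        then show False using True by simp
      qed
      then obtain z' where z': "z' \<in> ?S" "V z' = V x" "U z' = u'" unfolding cls_def by auto
      have "cuV u' x = cuV u' z'" using measV[of z' x u'] z'(2) by simp
      also have "\<dots> = cuW u' z'" using S3[OF z'(1)] z'(3) by simp
      also have "\<dots> = cuW u' x" using measW[OF z'(1) x z'(2)] by simp
      finally show ?thesis by simp
    next
      case False
      then show ?thesis using nnV[of u' x] nnW[of u' x] by linarith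
    qed
    have "(\<Sum>u\<in>U ` ?S. cuV u x) = (\<Sum>u\<in>U ` ?S. cuW u x)"
      using ce_ind_sum[OF fin x, where U=U and R=V] ce_ind_sum[OF fin x, where U=U and R=W] unfolding cuV_def cuW_def by simp
    then have "cuV u x = cuW u x"
      using sum_mono_inv[where f="\<lambda>u. cuV u x" and g="\<lambda>u. cuW u x" and I="U ` ?S" and i=u] le True fin by simp
    then show ?thesis unfolding cuV_def cuW_def .
  qed
qed



lemma restrict_eq_iff': "restrict f A = restrict f' A \<longleftrightarrow> (\<forall>j\<in>A. f j = f' j)"
  by (metis restrict_apply' restrict_ext)

lemma agree_restrict: "z \<in> agree_on T x \<longleftrightarrow> restrict z T = restrict x T"
  unfolding agree_on_def restrict_eq_iff' by simp

lemma cond_prob_map: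
  assumes fin: "finite (set_pmf p)"
  shows "cond_prob (map_pmf Y p) i a T (Y x) = ce p (\<lambda>z. restrict (Y z) T) (\<lambda>z. ind (Y z i = a)) x"
proof -
  have c: "cls p (\<lambda>z. restrict (Y z) T) x = {z\<in>set_pmf p. z \<in> Y -` agree_on T (Y x)}"
    by (auto simp: cls_def agree_restrict)
  have n: "(\<Sum>z\<in>cls p (\<lambda>z. restrict (Y z) T) x. pmf p z * ind (Y z i = a))
      = (\<Sum>z\<in>{z\<in>set_pmf p. z \<in> Y -` ({w. w i = a} \<inter> agree_on T (Y x))}. pmf p z)"
  proof -
    have "(\<Sum>z\<in>cls p (\<lambda>z. restrict (Y z) T) x. pmf p z * ind (Y z i = a))
        = (\<Sum>z\<in>{z\<in>cls p (\<lambda>z. restrict (Y z) T) x. Y z i = a}. pmf p z)"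
      by (simp add: sum.inter_filter[OF cls_fin[OF fin]] ind_def, intro sum.cong, auto)
    also have "{z\<in>cls p (\<lambda>z. restrict (Y z) T) x. Y z i = a} = {z\<in>set_pmf p. z \<in> Y -` ({w. w i = a} \<inter> agree_on T (Y x))}"
      unfolding c by auto
    finally show ?thesis .
  qed
  show ?thesis
    unfolding ce_def n unfolding c cond_prob_def measure_map_pmf prob_sum[OF fin] by simp
qed

lemma cond_prob_id:
  assumes fin: "finite (set_pmf p)"
  shows "cond_prob p i a T x = ce p (\<lambda>z. restrict z T) (\<lambda>z. ind (z i = a)) x"
  using cond_prob_map[OF fin, of id i a T x] by (simp add: map_pmf_id)

theorem proposition2:
  fixes N :: nat
    and E :: "nat set set"
    and A :: "nat \<Rightarrow> 'a set"
    and g :: "nat \<Rightarrow> 'a \<Rightarrow> 'b"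
    and p :: "(nat \<Rightarrow> 'a) pmf"
  assumes edges: "\<forall>e\<in>E. e \<subseteq> {1..N} \<and> card e = 2"
    and alph_fin: "\<forall>i\<in>{1..N}. finite (A i)"
    and support: "set_pmf p \<subseteq> PiE {1..N} A"
    and mrf: "markov_random_field {1..N} E p"
    and ent: "\<forall>i\<in>{1..N}.
       cond_entropy p (\<lambda>x. g i (x i)) (\<lambda>x. \<lambda>j\<in>nbrs E i. g j (x j))
     = cond_entropy p (\<lambda>x. g i (x i)) (\<lambda>x. restrict x (nbrs E i))"
  shows "markov_random_field {1..N} E (map_pmf (\<lambda>x j. g j (x j)) p)"
  unfolding markov_random_field_def
proof (intro ballI allI impI)
  let ?V = "{1..N}"
  let ?S = "set_pmf p"
  let ?Y = "\<lambda>x j. g j (x j)"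
  let ?q = "map_pmf ?Y p"
  fix i y a
  assume i: "i \<in> ?V" and pos: "measure_pmf.prob ?q (agree_on (?V - {i}) y) > 0"
  have fin: "finite ?S"
    by (rule finite_subset[OF support], rule finite_PiE) (use alph_fin in auto)
  define Ni where "Ni = nbrs E i"
  have Ni: "Ni \<subseteq> ?V - {i}"
  proof
    fix j assume "j \<in> Ni"
    then have "j \<noteq> i" "{i, j} \<in> E" unfolding Ni_def nbrs_def by auto
    moreover have "{i, j} \<subseteq> ?V" using edges \<open>{i, j} \<in> E\<close> by blast
    ultimately show "j \<in> ?V - {i}" by simp
  qed
  obtain x0 where x0: "x0 \<in> ?S" "?Y x0 \<in> agree_on (?V - {i}) y"
  proof -
    have "{z\<in>?S. z \<in> ?Y -` agree_on (?V - {i}) y} \<noteq> {}"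
      using pos unfolding measure_map_pmf prob_sum[OF fin] by (metis sum.empty less_irrefl)
    then show ?thesis using that by auto
  qed
  have agr: "agree_on T y = agree_on T (?Y x0)" if "T \<subseteq> ?V - {i}" for T
  proof -
    have "\<forall>j\<in>T. g j (x0 j) = y j" using x0(2) that unfolding agree_on_def by blast
    then show ?thesis unfolding agree_on_def by auto
  qed
  have agrc: "cond_prob ?q i a T y = cond_prob ?q i a T (?Y x0)" if "T \<subseteq> ?V - {i}" for T
    unfolding cond_prob_def agr[OF that] ..
  define f where "f z = ind (g i (z i) = a)" for z :: "nat \<Rightarrow> 'a"
  define R1 where "R1 z = restrict (?Y z) (?V - {i})" for z :: "nat \<Rightarrow> 'a"
  define R2 where "R2 z = restrict (?Y z) Ni" for z :: "nat \<Rightarrow> 'a"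
  define RV where "RV z = restrict z (?V - {i})" for z :: "nat \<Rightarrow> 'a"
  define RX where "RX z = restrict z Ni" for z :: "nat \<Rightarrow> 'a"
  have goal1: "cond_prob ?q i a (?V - {i}) y = ce p R1 f x0"
  proof -
    have "cond_prob ?q i a (?V - {i}) y = cond_prob ?q i a (?V - {i}) (?Y x0)" by (rule agrc) simp
    also have "\<dots> = ce p (\<lambda>z. restrict (?Y z) (?V - {i})) (\<lambda>z. ind (?Y z i = a)) x0"
      by (rule cond_prob_map[OF fin])
    also have "\<dots> = ce p R1 f x0" unfolding R1_def f_def ..
    finally show ?thesis .
  qed
  have goal2: "cond_prob ?q i a (nbrs E i) y = ce p R2 f x0"
  proof -
    have "cond_prob ?q i a Ni y = cond_prob ?q i a Ni (?Y x0)" by (rule agrc[OF Ni])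
    also have "\<dots> = ce p (\<lambda>z. restrict (?Y z) Ni) (\<lambda>z. ind (?Y z i = a)) x0"
      by (rule cond_prob_map[OF fin])
    also have "\<dots> = ce p R2 f x0" unfolding R2_def f_def ..
    finally show ?thesis unfolding Ni_def .
  qed
  \<comment> \<open>Markov property of X, summed over the fibre of g i\<close>
  have mrfX: "ce p RV (\<lambda>z. ind (z i = b)) z = ce p RX (\<lambda>z. ind (z i = b)) z" if z: "z \<in> ?S" for z b
  proof -
    have "measure_pmf.prob p (agree_on (?V - {i}) z) > 0"
      by (rule measure_pmf_posI[OF z]) (simp add: agree_on_def)
    then have "cond_prob p i b (?V - {i}) z = cond_prob p i b (nbrs E i) z"
      using mrf i unfolding markov_random_field_def by blast
    then show ?thesis unfolding cond_prob_id[OF fin] RV_def RX_def Ni_def .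
  qed
  define T where "T = {b \<in> (\<lambda>z. z i) ` ?S. g i b = a}"
  have finT: "finite T" unfolding T_def using fin by simp
  have fsum: "f z = (\<Sum>b\<in>T. ind (z i = b))" if "z \<in> ?S" for z
  proof -
    have "(\<Sum>b\<in>T. ind (z i = b)) = (\<Sum>b\<in>T. if b = z i then 1 else 0)"
      by (intro sum.cong) (auto simp: ind_def)
    also have "\<dots> = f z" using finT that by (simp add: sum.delta' T_def f_def ind_def)
    finally show ?thesis by simp
  qed
  have fc: "ce p R f w = ce p R (\<lambda>z. \<Sum>b\<in>T. ind (z i = b)) w" for R :: "(nat \<Rightarrow> 'a) \<Rightarrow> (nat \<Rightarrow> 'a)" and w
    by (rule ce_cong) (rule fsum)
  have step1: "ce p RV f z = ce p RX f z" if "z \<in> ?S" for z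
  proof -
    have "ce p RV f z = (\<Sum>b\<in>T. ce p RV (\<lambda>z. ind (z i = b)) z)"
      by (simp only: fc ce_sum)
    also have "\<dots> = (\<Sum>b\<in>T. ce p RX (\<lambda>z. ind (z i = b)) z)"
      using mrfX[OF that] by simp
    also have "\<dots> = ce p RX f z"
      by (simp only: fc ce_sum)
    finally show ?thesis .
  qed
  have step2: "ce p RX f z = ce p R2 f z" if z: "z \<in> ?S" for z
  proof -
    have R2eq: "R2 = (\<lambda>x. \<lambda>j\<in>Ni. g j (x j))" unfolding R2_def by simp
    have e: "cond_entropy p (\<lambda>x. g i (x i)) (\<lambda>x. \<lambda>j\<in>Ni. g j (x j)) = cond_entropy p (\<lambda>x. g i (x i)) RX"
      using ent i unfolding Ni_def RX_def by blast
    have "ce p RX (\<lambda>z. ind (g i (z i) = a)) z = ce p (\<lambda>x. \<lambda>j\<in>Ni. g j (x j)) (\<lambda>z. ind (g i (z i) = a)) z"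
    proof (rule ent_eq[OF fin _ e z])
      fix z1 z2 assume "RX z1 = RX z2"
      then show "(\<lambda>j\<in>Ni. g j (z1 j)) = (\<lambda>j\<in>Ni. g j (z2 j))"
        unfolding RX_def restrict_eq_iff' by simp
    qed
    then show ?thesis unfolding f_def R2eq .
  qed
  have "ce p R1 f x0 = ce p R1 (ce p RV f) x0"
  proof (rule ce_tower[OF fin x0(1)])
    fix z z' assume "RV z = RV z'"
    then show "R1 z = R1 z'" unfolding RV_def R1_def restrict_eq_iff' by simp
  qed
  also have "\<dots> = ce p R1 (ce p R2 f) x0"
    by (rule ce_cong) (simp add: step1 step2)
  also have "\<dots> = ce p R2 f x0"
  proof (rule ce_const[OF fin x0(1)])
    fix z assume "R1 z = R1 x0"
    then have "R2 z = R2 x0" using Ni unfolding R1_def R2_def restrict_eq_iff' by blast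
    then show "ce p R2 f z = ce p R2 f x0" by (rule ce_R[of R2])
  qed
  finally show "cond_prob ?q i a (?V - {i}) y = cond_prob ?q i a (nbrs E i) y"
    unfolding goal1 goal2 .
qed

end
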